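(* Let $D=\{z\in\mathbb C^2:\ |z_2|^2+x_1^2+y_1^4<1\}$ with defining function $\rho$, fix $\zeta\in bD$, and use the local coordinates centered at $\zeta$ described in the context, with $\delta>0$ small enough that $\frac{\partial\Delta}{\partial u_2}(w,z)\ne0$ for $w\in bD$, $|w-\zeta|<\delta$, $|z-\zeta|<\delta$. Suppose $f$ is a $C^1$ function on $bD$ supported in $\{w\in bD:|w-\zeta|<\delta\}$. If $z\in D$ and $|z-\zeta|<\delta$, then $$\mathbf C f(z)=\int_{bD}\frac{1}{\Delta(w,z)}\,\frac{\partial}{\partial u_2}\big(f(w)\gamma(w)\big)\,du_1\,dv_1\,du_2,\qquad \gamma(w)=\frac{\Lambda(u_1,v_1,u_2)}{\frac{\partial\Delta}{\partial u_2}(w,z)}.$$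
   Context: $\rho(w)=|w_2|^2+u_1^2+v_1^4-1$, $\Delta(w,z)=\sum_{j=1}^2\frac{\partial\rho}{\partial w_j}(w)(w_j-z_j)$. The Cauchy-Leray integral is $\mathbf C f(z)=\frac{1}{(2\pi i)^2}\int_{bD}f(w)\,\frac{j^*(\partial\rho\wedge\bar\partial\partial\rho)(w)}{\Delta(w,z)^2}$, $z\in D$, with $j^*$ the pullback by $bD\hookrightarrow\mathbb C^2$; equivalently $\mathbf Cf(z)=\int_{bD}\frac{f(w)\Gamma(w)}{\Delta(w,z)^2}d\sigma(w)$, where $d\sigma$ is induced Lebesgue measure and $\Gamma$ is the smooth positive function with $\Gamma\,d\sigma=(2\pi i)^{-2}j^*(\partial\rho\wedge\bar\partial\partial\rho)$. Local coordinates: $w=(u_1+iv_1,u_2+iv_2)$ obtained by a translation and unitary map so that $\zeta=0$, $\partial\rho/\partial v_2(\zeta)=|\nabla\rho(\zeta)|$ and the other first partials of $\rho$ vanish at $\zeta$; near $\zeta$, $bD$ is the graph $v_2=\Phi(u_1,v_1,u_2)$, and $\Lambda$ is defined by $\Gamma(w)\,d\sigma(w)=\Lambda(u_1,v_1,u_2)\,du_1\,dv_1\,du_2$ there. *)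

theory Defs
  imports "HOL-Analysis.Analysis"
begin

type_synonym r3 = "real \<times> real \<times> real"
type_synonym c2 = "complex \<times> complex"

text \<open>Points of C^2 are pairs (w1, w2), w1 = u1 + i v1, w2 = u2 + i v2 (Euclidean norm).\<close>

definition rho :: "c2 \<Rightarrow> real" where
  "rho w = (cmod (snd w))\<^sup>2 + (Re (fst w))\<^sup>2 + (Im (fst w)) ^ 4 - 1"

definition Dom :: "c2 set" where
  "Dom = {z. (cmod (snd z))\<^sup>2 + (Re (fst z))\<^sup>2 + (Im (fst z)) ^ 4 < 1}"

definition dir_deriv :: "('a::real_vector \<Rightarrow> 'b::real_normed_vector) \<Rightarrow> 'a \<Rightarrow> 'a \<Rightarrow> 'b" where
  "dir_deriv g w e = vector_derivative (\<lambda>s::real. g (w + s *\<^sub>R e)) (at 0)"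

definition coord :: "nat \<Rightarrow> c2 \<Rightarrow> complex" where
  "coord j w = (if j = 1 then fst w else snd w)"

definition udir :: "nat \<Rightarrow> c2" where "udir j = (if j = 1 then (1, 0) else (0, 1))"
definition vdir :: "nat \<Rightarrow> c2" where "vdir j = (if j = 1 then (\<i>, 0) else (0, \<i>))"

definition dw :: "(c2 \<Rightarrow> complex) \<Rightarrow> nat \<Rightarrow> c2 \<Rightarrow> complex" where
  "dw g j w = (dir_deriv g w (udir j) - \<i> * dir_deriv g w (vdir j)) / 2"

definition dwbar :: "(c2 \<Rightarrow> complex) \<Rightarrow> nat \<Rightarrow> c2 \<Rightarrow> complex" where
  "dwbar g j w = (dir_deriv g w (udir j) + \<i> * dir_deriv g w (vdir j)) / 2"

definition rhoC :: "c2 \<Rightarrow> complex" where "rhoC w = complex_of_real (rho w)"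

definition Delta :: "c2 \<Rightarrow> c2 \<Rightarrow> complex" where
  "Delta w z = (\<Sum>j\<in>{1,2}. dw rhoC j w * (coord j w - coord j z))"

definition grad_norm :: "c2 \<Rightarrow> real" where
  "grad_norm w = sqrt ((\<Sum>j\<in>{1,2}. (dir_deriv rho w (udir j))\<^sup>2 + (dir_deriv rho w (vdir j))\<^sup>2))"

text \<open>A unitary 2x2 matrix U = [[a,b],[c,d]] (U^* U = I).  Local coordinates
  w' = U (w - zeta); the inverse map is w = zeta + U^* w'.\<close>
definition unitary2 :: "complex \<Rightarrow> complex \<Rightarrow> complex \<Rightarrow> complex \<Rightarrow> bool" where
  "unitary2 a b c d \<longleftrightarrow> (cmod a)\<^sup>2 + (cmod c)\<^sup>2 = 1 \<and> (cmod b)\<^sup>2 + (cmod d)\<^sup>2 = 1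
     \<and> cnj a * b + cnj c * d = 0"

definition loc_inv :: "c2 \<Rightarrow> complex \<Rightarrow> complex \<Rightarrow> complex \<Rightarrow> complex \<Rightarrow> c2 \<Rightarrow> c2" where
  "loc_inv \<zeta> a b c d w' =
     (fst \<zeta> + cnj a * fst w' + cnj c * snd w', snd \<zeta> + cnj b * fst w' + cnj d * snd w')"

text \<open>Parametrisation of bD near zeta by (u1,v1,u2): the point with local coordinates
  (u1 + i v1, u2 + i Phi(u1,v1,u2)), expressed in the original coordinates of C^2.\<close>
definition psi :: "c2 \<Rightarrow> complex \<Rightarrow> complex \<Rightarrow> complex \<Rightarrow> complex \<Rightarrow> (r3 \<Rightarrow> real) \<Rightarrow> r3 \<Rightarrow> c2" where
  "psi \<zeta> a b c d \<Phi> t = (case t of (u1, v1, u2) \<Rightarrow>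
     loc_inv \<zeta> a b c d (Complex u1 v1, Complex u2 (\<Phi> t)))"

definition tdir :: "nat \<Rightarrow> r3" where
  "tdir m = (if m = 1 then (1, 0, 0) else if m = 2 then (0, 1, 0) else (0, 0, 1))"

fun pd_iter :: "nat list \<Rightarrow> (r3 \<Rightarrow> 'b::real_normed_vector) \<Rightarrow> r3 \<Rightarrow> 'b" where
  "pd_iter [] g = g"
| "pd_iter (m # ms) g = (\<lambda>t. dir_deriv (pd_iter ms g) t (tdir m))"

definition Ck_on :: "nat \<Rightarrow> r3 set \<Rightarrow> (r3 \<Rightarrow> 'b::real_normed_vector) \<Rightarrow> bool" where
  "Ck_on k V g \<longleftrightarrow> (\<forall>ms. length ms \<le> k \<longrightarrow> set ms \<subseteq> {1,2,3} \<longrightarrow>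
      continuous_on V (pd_iter ms g) \<and>
      (length ms < k \<longrightarrow> (\<forall>m\<in>{1,2,3}. \<forall>t\<in>V.
         ((\<lambda>s. pd_iter ms g (t + s *\<^sub>R tdir m)) has_vector_derivative pd_iter (m # ms) g t) (at 0))))"

definition smooth_on :: "r3 set \<Rightarrow> (r3 \<Rightarrow> 'b::real_normed_vector) \<Rightarrow> bool" where
  "smooth_on V g \<longleftrightarrow> (\<forall>k. Ck_on k V g)"

definition det3 :: "(nat \<Rightarrow> complex) \<Rightarrow> (nat \<Rightarrow> complex) \<Rightarrow> (nat \<Rightarrow> complex) \<Rightarrow> complex" where
  "det3 r s q = r 1 * (s 2 * q 3 - s 3 * q 2) - r 2 * (s 1 * q 3 - s 3 * q 1)
               + r 3 * (s 1 * q 2 - s 2 * q 1)"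

definition dpsi :: "(r3 \<Rightarrow> c2) \<Rightarrow> nat \<Rightarrow> nat \<Rightarrow> r3 \<Rightarrow> complex" where
  "dpsi p j m t = dir_deriv (\<lambda>t. coord j (p t)) t (tdir m)"

text \<open>d rho /\ dbar d rho = sum_{i,j,k} rho_i rho_{j kbar} dw_i /\ dwbar_k /\ dw_j, and its
  pullback by the parametrisation p is  form_coeff p t  du1 /\ dv1 /\ du2.\<close>
definition form_coeff :: "(r3 \<Rightarrow> c2) \<Rightarrow> r3 \<Rightarrow> complex" where
  "form_coeff p t = (\<Sum>i\<in>{1,2}. \<Sum>j\<in>{1,2}. \<Sum>k\<in>{1,2}.
      dw rhoC i (p t) * dwbar (dw rhoC j) k (p t) *
      det3 (\<lambda>m. dpsi p i m t) (\<lambda>m. cnj (dpsi p k m t)) (\<lambda>m. dpsi p j m t))"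

text \<open>Gamma dsigma = (2 pi i)^(-2) j^*(d rho /\ dbar d rho) is a positive measure on bD, so in
  the chart Gamma dsigma = Lambda du1 dv1 du2 with Lambda the absolute value of the
  coefficient of the pulled-back form.\<close>
definition Lam :: "(r3 \<Rightarrow> c2) \<Rightarrow> r3 \<Rightarrow> real" where
  "Lam p t = cmod (form_coeff p t / (2 * pi * \<i>)\<^sup>2)"

definition dDelta_du2 :: "(r3 \<Rightarrow> c2) \<Rightarrow> r3 \<Rightarrow> c2 \<Rightarrow> complex" where
  "dDelta_du2 p t z = dir_deriv (\<lambda>t. Delta (p t) z) t (tdir 3)"

text \<open>Cauchy--Leray integral of f supported in the chart p(V):
  C f(z) = int_{bD} f Gamma / Delta^2 dsigma = int_V f(p t) Lambda(t) / Delta(p t, z)^2 dt\<close>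
definition cauchy_leray_chart :: "(r3 \<Rightarrow> c2) \<Rightarrow> r3 set \<Rightarrow> (c2 \<Rightarrow> complex) \<Rightarrow> c2 \<Rightarrow> complex" where
  "cauchy_leray_chart p V f z =
     integral V (\<lambda>t. f (p t) * complex_of_real (Lam p t) / (Delta (p t) z)\<^sup>2)"

end

theory Submission
  imports Defs "HOL-Analysis.Analysis"
begin


definition HD :: "r3 \<Rightarrow> r3 \<Rightarrow> (r3 \<Rightarrow> 'b::real_normed_vector) \<Rightarrow> 'b \<Rightarrow> bool" where
  "HD e t g D \<longleftrightarrow> ((\<lambda>s. g (t + s *\<^sub>R e)) has_vector_derivative D) (at 0)"

lemma HD_const: "HD e t (\<lambda>_. k) 0"
  by (simp add: HD_def)

lemma HD_add: "HD e t f Df \<Longrightarrow> HD e t g Dg \<Longrightarrow> HD e t (\<lambda>x. f x + g x) (Df + Dg)"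
  unfolding HD_def by (rule has_vector_derivative_add)

lemma HD_diff: "HD e t f Df \<Longrightarrow> HD e t g Dg \<Longrightarrow> HD e t (\<lambda>x. f x - g x) (Df - Dg)"
  unfolding HD_def by (rule has_vector_derivative_diff)

lemma HD_mult:
  fixes f g :: "r3 \<Rightarrow> 'a::real_normed_algebra"
  shows "HD e t f Df \<Longrightarrow> HD e t g Dg \<Longrightarrow> HD e t (\<lambda>x. f x * g x) (f t * Dg + Df * g t)"
  unfolding HD_def using has_vector_derivative_mult[of "\<lambda>s. f (t + s *\<^sub>R e)" Df 0 UNIV "\<lambda>s. g (t + s *\<^sub>R e)" Dg]
  by simp

lemma HD_of_real: "HD e t (f :: r3 \<Rightarrow> real) D \<Longrightarrow> HD e t (\<lambda>x. complex_of_real (f x)) (of_real D)"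
  unfolding HD_def by (rule has_vector_derivative_of_real) (simp add: has_real_derivative_iff_has_vector_derivative)

lemma HD_cnj: "HD e t f D \<Longrightarrow> HD e t (\<lambda>x. cnj (f x)) (cnj D)"
  unfolding HD_def by (rule has_vector_derivative_cnj)

lemma HD_Re: "HD e t f D \<Longrightarrow> HD e t (\<lambda>x. Re (f x)) (Re D)"
  unfolding HD_def by (rule bounded_linear.has_vector_derivative[OF bounded_linear_Re])

lemma HD_Im: "HD e t f D \<Longrightarrow> HD e t (\<lambda>x. Im (f x)) (Im D)"
  unfolding HD_def by (rule bounded_linear.has_vector_derivative[OF bounded_linear_Im])

lemma HD_chain:
  fixes g :: "r3 \<Rightarrow> 'a::real_normed_field"
  assumes "HD e t g D" "(F has_field_derivative F') (at (g t))"
  shows "HD e t (\<lambda>x. F (g x)) (D * F')"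
  using field_vector_diff_chain_at[of "\<lambda>s. g (t + s *\<^sub>R e)" D 0 F F'] assms
  unfolding HD_def by (simp add: o_def)

lemma HD_norm:
  fixes g :: "r3 \<Rightarrow> complex"
  assumes "HD e t g D" "g t \<noteq> 0"
  shows "HD e t (\<lambda>x. cmod (g x)) (inner D (sgn (g t)))"
proof -
  have 1: "((\<lambda>s. g (t + s *\<^sub>R e)) has_derivative (\<lambda>h. h *\<^sub>R D)) (at 0)"
    using assms(1) unfolding HD_def has_vector_derivative_def .
  have 2: "(norm has_derivative (\<lambda>h. inner h (sgn (g (t + 0 *\<^sub>R e))))) (at (g (t + 0 *\<^sub>R e)))"
    using has_derivative_norm[of "g t"] assms(2) by (simp add: gderiv_def)
  have "((norm \<circ> (\<lambda>s. g (t + s *\<^sub>R e))) has_derivative ((\<lambda>h. inner h (sgn (g (t + 0 *\<^sub>R e)))) \<circ> (\<lambda>h. h *\<^sub>R D))) (at 0)"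
    by (rule diff_chain_at[OF 1 2])
  then show ?thesis unfolding HD_def has_vector_derivative_def
    by (simp add: o_def inner_scaleR_left)
qed

lemma HD_inverse:
  fixes g :: "r3 \<Rightarrow> 'a::real_normed_field"
  assumes "HD e t g D" "g t \<noteq> 0"
  shows "HD e t (\<lambda>x. inverse (g x)) (D * (- (inverse (g t) ^ 2)))"
  by (rule HD_chain[OF assms(1)]) (use DERIV_inverse[OF assms(2), of UNIV] in \<open>simp add: eval_nat_numeral\<close>)

definition D3 :: "r3 set \<Rightarrow> (r3 \<Rightarrow> 'b::real_normed_vector) \<Rightarrow> (r3 \<Rightarrow> 'b) \<Rightarrow> bool" where
  "D3 U g g' \<longleftrightarrow> continuous_on U g \<and> continuous_on U g' \<and> (\<forall>t\<in>U. HD (tdir 3) t g (g' t))"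

definition C3 :: "r3 set \<Rightarrow> (r3 \<Rightarrow> 'b::real_normed_vector) \<Rightarrow> bool" where
  "C3 U g \<longleftrightarrow> (\<exists>g'. D3 U g g')"

definition C32 :: "r3 set \<Rightarrow> (r3 \<Rightarrow> 'b::real_normed_vector) \<Rightarrow> bool" where
  "C32 U g \<longleftrightarrow> (\<exists>g'. D3 U g g' \<and> C3 U g')"

lemma D3_C3: "D3 U g g' \<Longrightarrow> C3 U g" by (auto simp: C3_def)
lemma C32_C3: "C32 U g \<Longrightarrow> C3 U g" by (auto simp: C32_def C3_def)
lemma C3_cont: "C3 U g \<Longrightarrow> continuous_on U g" by (auto simp: C3_def D3_def)

lemma D3_const: "D3 U (\<lambda>_. k) (\<lambda>_. 0)"
  by (simp add: D3_def HD_const)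

lemma D3_add: "D3 U f f' \<Longrightarrow> D3 U g g' \<Longrightarrow> D3 U (\<lambda>x. f x + g x) (\<lambda>x. f' x + g' x)"
  by (auto simp: D3_def intro!: continuous_intros HD_add)

lemma D3_diff: "D3 U f f' \<Longrightarrow> D3 U g g' \<Longrightarrow> D3 U (\<lambda>x. f x - g x) (\<lambda>x. f' x - g' x)"
  by (auto simp: D3_def intro!: continuous_intros HD_diff)

lemma D3_mult:
  fixes f g :: "r3 \<Rightarrow> 'a::real_normed_algebra"
  shows "D3 U f f' \<Longrightarrow> D3 U g g' \<Longrightarrow> D3 U (\<lambda>x. f x * g x) (\<lambda>x. f x * g' x + f' x * g x)"
  by (auto simp: D3_def intro!: continuous_intros HD_mult)

lemma D3_of_real: "D3 U (f :: r3 \<Rightarrow> real) f' \<Longrightarrow> D3 U (\<lambda>x. complex_of_real (f x)) (\<lambda>x. of_real (f' x))"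
  by (auto simp: D3_def intro!: continuous_intros HD_of_real)

lemma D3_cnj: "D3 U f f' \<Longrightarrow> D3 U (\<lambda>x. cnj (f x)) (\<lambda>x. cnj (f' x))"
  by (auto simp: D3_def intro!: continuous_intros HD_cnj)

lemma D3_Re: "D3 U f f' \<Longrightarrow> D3 U (\<lambda>x. Re (f x)) (\<lambda>x. Re (f' x))"
  by (auto simp: D3_def intro!: continuous_intros HD_Re)

lemma D3_Im: "D3 U f f' \<Longrightarrow> D3 U (\<lambda>x. Im (f x)) (\<lambda>x. Im (f' x))"
  by (auto simp: D3_def intro!: continuous_intros HD_Im)

lemma D3_norm:
  fixes f :: "r3 \<Rightarrow> complex"
  shows "D3 U f f' \<Longrightarrow> (\<forall>x\<in>U. f x \<noteq> 0) \<Longrightarrow> D3 U (\<lambda>x. cmod (f x)) (\<lambda>x. inner (f' x) (sgn (f x)))"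
  by (auto simp: D3_def intro!: continuous_intros HD_norm)

lemma D3_inverse:
  fixes f :: "r3 \<Rightarrow> 'a::real_normed_field"
  shows "D3 U f f' \<Longrightarrow> (\<forall>x\<in>U. f x \<noteq> 0) \<Longrightarrow>
     D3 U (\<lambda>x. inverse (f x)) (\<lambda>x. f' x * (- (inverse (f x) ^ 2)))"
  unfolding D3_def by (intro conjI ballI continuous_intros HD_inverse; simp)

lemma D3_fst: "D3 U (\<lambda>t. fst t) (\<lambda>_. 0)"
  by (simp add: D3_def HD_def tdir_def continuous_intros)

lemma D3_fst_snd: "D3 U (\<lambda>t. fst (snd t)) (\<lambda>_. 0)"
  by (simp add: D3_def HD_def tdir_def continuous_intros)

lemma D3_snd_snd: "D3 U (\<lambda>t. snd (snd t)) (\<lambda>_. 1)"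
  by (auto simp: D3_def HD_def tdir_def intro!: continuous_intros derivative_eq_intros)

lemma HD_cong:
  assumes "open U" "t \<in> U" "\<forall>x\<in>U. f x = g x" "HD e t f D"
  shows "HD e t g D"
proof -
  have o: "open {s::real. t + s *\<^sub>R e \<in> U}"
    using open_vimage[OF assms(1), of "\<lambda>s::real. t + s *\<^sub>R e"] by (simp add: vimage_def continuous_intros)
  show ?thesis using assms(4) unfolding HD_def
    by (rule has_vector_derivative_transform_within_open[OF _ o]) (use assms in auto)
qed

lemma D3_cong:
  assumes "open U" "\<forall>x\<in>U. f x = g x" "D3 U f f'"
  shows "D3 U g f'"
  using assms(3) unfolding D3_def
  using HD_cong[OF assms(1) _ assms(2)] continuous_on_cong[OF refl, of U f g] assms(2) by blast

lemma D3_cong':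
  assumes "open U" "\<forall>x\<in>U. f' x = g' x" "D3 U f f'"
  shows "D3 U f g'"
  using assms(3) unfolding D3_def
  using continuous_on_cong[OF refl, of U f' g'] assms(2) by force

lemma C3_cong: "open U \<Longrightarrow> \<forall>x\<in>U. f x = g x \<Longrightarrow> C3 U f \<Longrightarrow> C3 U g"
  unfolding C3_def using D3_cong by blast

lemma C32_cong: "open U \<Longrightarrow> \<forall>x\<in>U. f x = g x \<Longrightarrow> C32 U f \<Longrightarrow> C32 U g"
  unfolding C32_def using D3_cong by blast

lemma D3_mono: "D3 U f f' \<Longrightarrow> U' \<subseteq> U \<Longrightarrow> D3 U' f f'"
  unfolding D3_def by (auto intro: continuous_on_subset)

lemma C3_mono: "C3 U f \<Longrightarrow> U' \<subseteq> U \<Longrightarrow> C3 U' f"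
  unfolding C3_def using D3_mono by blast

lemma C3_const: "C3 U (\<lambda>_. k)" using D3_const by (rule D3_C3)
lemma C3_fst: "C3 U (\<lambda>t. fst t)" using D3_fst by (rule D3_C3)
lemma C3_fst_snd: "C3 U (\<lambda>t. fst (snd t))" using D3_fst_snd by (rule D3_C3)
lemma C3_snd_snd: "C3 U (\<lambda>t. snd (snd t))" using D3_snd_snd by (rule D3_C3)

lemma C3_add: "C3 U f \<Longrightarrow> C3 U g \<Longrightarrow> C3 U (\<lambda>x. f x + g x)"
  unfolding C3_def using D3_add by blast
lemma C3_diff: "C3 U f \<Longrightarrow> C3 U g \<Longrightarrow> C3 U (\<lambda>x. f x - g x)"
  unfolding C3_def using D3_diff by blast
lemma C3_mult: "C3 U f \<Longrightarrow> C3 U g \<Longrightarrow> C3 U (\<lambda>x. (f x :: 'a::real_normed_algebra) * g x)"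
  unfolding C3_def using D3_mult by blast
lemma C3_of_real: "C3 U (f :: r3 \<Rightarrow> real) \<Longrightarrow> C3 U (\<lambda>x. complex_of_real (f x))"
  unfolding C3_def using D3_of_real by blast
lemma C3_cnj: "C3 U f \<Longrightarrow> C3 U (\<lambda>x. cnj (f x))"
  unfolding C3_def using D3_cnj by blast
lemma C3_Re: "C3 U f \<Longrightarrow> C3 U (\<lambda>x. Re (f x))"
  unfolding C3_def using D3_Re by blast
lemma C3_Im: "C3 U f \<Longrightarrow> C3 U (\<lambda>x. Im (f x))"
  unfolding C3_def using D3_Im by blast
lemma C3_norm: "C3 U (f :: r3 \<Rightarrow> complex) \<Longrightarrow> \<forall>x\<in>U. f x \<noteq> 0 \<Longrightarrow> C3 U (\<lambda>x. cmod (f x))"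
  unfolding C3_def using D3_norm by blast
lemma C3_inverse: "C3 U (f :: r3 \<Rightarrow> 'a::real_normed_field) \<Longrightarrow> \<forall>x\<in>U. f x \<noteq> 0 \<Longrightarrow> C3 U (\<lambda>x. inverse (f x))"
  unfolding C3_def using D3_inverse by blast
lemma C3_divide: "C3 U (f :: r3 \<Rightarrow> 'a::real_normed_field) \<Longrightarrow> C3 U g \<Longrightarrow> \<forall>x\<in>U. g x \<noteq> 0 \<Longrightarrow> C3 U (\<lambda>x. f x / g x)"
  unfolding divide_inverse by (intro C3_mult C3_inverse)
lemma C3_power: "C3 U (f :: r3 \<Rightarrow> 'a::real_normed_algebra_1) \<Longrightarrow> C3 U (\<lambda>x. f x ^ n)"
  by (induction n) (simp_all add: C3_const C3_mult)

lemma C32_const: "C32 U (\<lambda>_. k)" unfolding C32_def using D3_const C3_const by blast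
lemma C32_fst: "C32 U (\<lambda>t. fst t)" unfolding C32_def using D3_fst C3_const by blast
lemma C32_fst_snd: "C32 U (\<lambda>t. fst (snd t))" unfolding C32_def using D3_fst_snd C3_const by blast
lemma C32_snd_snd: "C32 U (\<lambda>t. snd (snd t))" unfolding C32_def using D3_snd_snd C3_const by blast

lemma C32_add: "C32 U f \<Longrightarrow> C32 U g \<Longrightarrow> C32 U (\<lambda>x. f x + g x)"
  unfolding C32_def using D3_add C3_add by blast
lemma C32_diff: "C32 U f \<Longrightarrow> C32 U g \<Longrightarrow> C32 U (\<lambda>x. f x - g x)"
  unfolding C32_def using D3_diff C3_diff by blast
lemma C32_mult: "C32 U f \<Longrightarrow> C32 U g \<Longrightarrow> C32 U (\<lambda>x. (f x :: 'a::real_normed_algebra) * g x)"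
proof -
  assume "C32 U f" "C32 U g"
  then obtain f' g' where "D3 U f f'" "C3 U f'" "D3 U g g'" "C3 U g'" unfolding C32_def by blast
  moreover have "C3 U (\<lambda>x. f x * g' x + f' x * g x)"
    using calculation by (intro C3_add C3_mult) (auto intro: D3_C3)
  ultimately show ?thesis unfolding C32_def using D3_mult by blast
qed
lemma C32_of_real: "C32 U (f :: r3 \<Rightarrow> real) \<Longrightarrow> C32 U (\<lambda>x. complex_of_real (f x))"
  unfolding C32_def using D3_of_real C3_of_real by blast
lemma C32_cnj: "C32 U f \<Longrightarrow> C32 U (\<lambda>x. cnj (f x))"
  unfolding C32_def using D3_cnj C3_cnj by blast
lemma C32_Re: "C32 U f \<Longrightarrow> C32 U (\<lambda>x. Re (f x))"
  unfolding C32_def using D3_Re C3_Re by blast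
lemma C32_Im: "C32 U f \<Longrightarrow> C32 U (\<lambda>x. Im (f x))"
  unfolding C32_def using D3_Im C3_Im by blast
lemma C32_power: "C32 U (f :: r3 \<Rightarrow> 'a::real_normed_algebra_1) \<Longrightarrow> C32 U (\<lambda>x. f x ^ n)"
  by (induction n) (simp_all add: C32_const C32_mult)



lemma dir_deriv_eq: "((\<lambda>s. g (w + s *\<^sub>R e)) has_vector_derivative D) (at 0) \<Longrightarrow> dir_deriv g w e = D"
  unfolding dir_deriv_def by (rule vector_derivative_at)

lemma rho_line: "rho (w + s *\<^sub>R e) = (Re (snd w) + s * Re (snd e))\<^sup>2 + (Im (snd w) + s * Im (snd e))\<^sup>2
   + (Re (fst w) + s * Re (fst e))\<^sup>2 + (Im (fst w) + s * Im (fst e)) ^ 4 - 1"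
  by (cases w, cases e) (simp add: rho_def cmod_power2)

lemma rho_deriv: "((\<lambda>s. rho (w + s *\<^sub>R e)) has_real_derivative
   (2*Re(snd w)*Re(snd e) + 2*Im(snd w)*Im(snd e) + 2*Re(fst w)*Re(fst e) + 4*Im(fst w)^3*Im(fst e))) (at 0)"
  unfolding rho_line by (auto intro!: derivative_eq_intros)

lemma rhoC_dir: "dir_deriv rhoC w e = complex_of_real
   (2*Re(snd w)*Re(snd e) + 2*Im(snd w)*Im(snd e) + 2*Re(fst w)*Re(fst e) + 4*Im(fst w)^3*Im(fst e))"
  unfolding rhoC_def
  by (rule dir_deriv_eq, rule has_vector_derivative_of_real, rule rho_deriv)

definition rho1 :: "c2 \<Rightarrow> complex" where "rho1 w = Complex (Re (fst w)) (-2 * Im (fst w) ^ 3)"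
definition rho2 :: "c2 \<Rightarrow> complex" where "rho2 w = cnj (snd w)"

lemma dw_rhoC_1: "dw rhoC 1 = rho1"
  by (rule ext) (simp add: dw_def rhoC_dir udir_def vdir_def rho1_def complex_eq_iff)

lemma dw_rhoC_1': "dw rhoC (Suc 0) = rho1" using dw_rhoC_1 by simp

lemma dw_rhoC_2: "dw rhoC 2 = rho2"
  by (rule ext) (simp add: dw_def rhoC_dir udir_def vdir_def rho2_def complex_eq_iff)

lemma rho1_dir: "dir_deriv rho1 w e = Complex (Re (fst e)) (-6 * Im (fst w)^2 * Im (fst e))"
proof (rule dir_deriv_eq)
  show "((\<lambda>s. rho1 (w + s *\<^sub>R e)) has_vector_derivative Complex (Re (fst e)) (-6 * Im (fst w)^2 * Im (fst e))) (at 0)"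
    unfolding has_vector_derivative_complex_iff rho1_def
    by (cases w, cases e) (auto intro!: derivative_eq_intros)
qed

lemma rho2_dir: "dir_deriv rho2 w e = cnj (snd e)"
proof (rule dir_deriv_eq)
  show "((\<lambda>s. rho2 (w + s *\<^sub>R e)) has_vector_derivative cnj (snd e)) (at 0)"
    unfolding has_vector_derivative_complex_iff rho2_def
    by (cases w, cases e) (auto intro!: derivative_eq_intros)
qed

definition H1 :: "c2 \<Rightarrow> real" where "H1 w = (1 + 6 * Im (fst w)^2) / 2"

lemma dwbar_11: "dwbar (dw rhoC 1) 1 w = complex_of_real (H1 w)"
  by (simp add: dw_rhoC_1 dw_rhoC_1' dwbar_def rho1_dir udir_def vdir_def H1_def complex_eq_iff)
lemma dwbar_12: "dwbar (dw rhoC 1) 2 w = 0"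
  by (simp add: dw_rhoC_1 dw_rhoC_1' dwbar_def rho1_dir udir_def vdir_def complex_eq_iff)
lemma dwbar_21: "dwbar (dw rhoC 2) 1 w = 0"
  by (simp add: dw_rhoC_2 dwbar_def rho2_dir udir_def vdir_def complex_eq_iff)
lemma dwbar_22: "dwbar (dw rhoC 2) 2 w = 1"
  by (simp add: dw_rhoC_2 dwbar_def rho2_dir udir_def vdir_def complex_eq_iff)

lemma Delta_eq: "Delta w z = rho1 w * (fst w - fst z) + rho2 w * (snd w - snd z)"
  by (simp add: Delta_def dw_rhoC_1 dw_rhoC_1' dw_rhoC_2 coord_def)



lemma E_step1:
  fixes X :: "nat \<Rightarrow> nat \<Rightarrow> complex" and R :: "nat \<Rightarrow> complex" and h1 h2 :: real
  assumes "\<And>j k. j \<in> {1,2} \<Longrightarrow> k \<in> {1,2} \<Longrightarrow> Hm j k = (if j = k then (if j = 1 then complex_of_real h1 else complex_of_real h2) else 0)"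
  defines "Am m \<equiv> R 1 * X m 1 + R 2 * X m 2"
  defines "hh a b \<equiv> h1 * X a 1 * cnj (X b 1) + h2 * X a 2 * cnj (X b 2)"
  shows "(\<Sum>i\<in>{1,2}. \<Sum>j\<in>{1,2}. \<Sum>k\<in>{1,2}. R i * Hm j k *
      det3 (\<lambda>m. X m i) (\<lambda>m. cnj (X m k)) (\<lambda>m. X m j))
    = Am 1 * (hh 3 2 - hh 2 3) - Am 2 * (hh 3 1 - hh 1 3) + Am 3 * (hh 2 1 - hh 1 2)"
  by (simp add: assms det3_def algebra_simps)

lemma E_step2:
  fixes A1 A2 C1 C2 :: complex
  assumes "Re z1 = 0" "Re z2 = 0" "Re z3 = 0"
  shows "z1 * (cnj w1 - w1) - z2 * (cnj w2 - w2) + z3 * (cnj w3 - w3)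
     = complex_of_real (-2 * (Im z1 * Im (cnj w1) - Im z2 * Im (cnj w2) + Im z3 * Im (cnj w3)))"
  using assms by (simp add: complex_eq_iff algebra_simps)

lemma E_formula:
  fixes X :: "nat \<Rightarrow> nat \<Rightarrow> complex" and R :: "nat \<Rightarrow> complex" and ha hb pa pb pc :: real
    and aA aB cA cB :: complex
  assumes H: "\<And>j k. j \<in> {1,2} \<Longrightarrow> k \<in> {1,2} \<Longrightarrow> Hm j k = (if j = k then (if j = 1 then complex_of_real ha else complex_of_real hb) else 0)"
  assumes X: "X 1 1 = aA + \<i> * pa * cA" "X 1 2 = aB + \<i> * pa * cB"
     "X 2 1 = \<i> * aA + \<i> * pb * cA" "X 2 2 = \<i> * aB + \<i> * pb * cB"
     "X 3 1 = (1 + \<i> * pc) * cA" "X 3 2 = (1 + \<i> * pc) * cB"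
  assumes cons: "\<And>m. m \<in> {1,2,3} \<Longrightarrow> Re (R 1 * X m 1 + R 2 * X m 2) = 0"
  defines "gam \<equiv> R 1 * cA + R 2 * cB"
  defines "aa \<equiv> ha * (cmod aA)\<^sup>2 + hb * (cmod aB)\<^sup>2"
  defines "cc \<equiv> ha * (cmod cA)\<^sup>2 + hb * (cmod cB)\<^sup>2"
  defines "hAC \<equiv> ha * aA * cnj cA + hb * aB * cnj cB"
  shows "(\<Sum>i\<in>{1,2}. \<Sum>j\<in>{1,2}. \<Sum>k\<in>{1,2}. R i * Hm j k *
      det3 (\<lambda>m. X m i) (\<lambda>m. cnj (X m k)) (\<lambda>m. X m j))
    = complex_of_real (-2 * Im gam * ((1 + pc\<^sup>2) * aa + (pa\<^sup>2 + pb\<^sup>2) * cc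
        + 2 * (pb - pa * pc) * Re hAC + 2 * (pa + pb * pc) * Im hAC))"
proof -
  define Am where "Am m = R 1 * X m 1 + R 2 * X m 2" for m
  define hh where "hh a b = ha * X a 1 * cnj (X b 1) + hb * X a 2 * cnj (X b 2)" for a b
  define al where "al = R 1 * aA + R 2 * aB"
  have c1: "Re (Am 1) = 0" "Re (Am 2) = 0" "Re (Am 3) = 0" using cons by (auto simp: Am_def)
  have hc: "hh 3 2 = cnj (hh 2 3)" "hh 3 1 = cnj (hh 1 3)" "hh 2 1 = cnj (hh 1 2)"
    by (simp_all add: hh_def)
  have "(\<Sum>i\<in>{1,2}. \<Sum>j\<in>{1,2}. \<Sum>k\<in>{1,2}. R i * Hm j k *
      det3 (\<lambda>m. X m i) (\<lambda>m. cnj (X m k)) (\<lambda>m. X m j))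
     = Am 1 * (hh 3 2 - hh 2 3) - Am 2 * (hh 3 1 - hh 1 3) + Am 3 * (hh 2 1 - hh 1 2)"
    unfolding Am_def hh_def by (rule E_step1[OF H])
  also have "\<dots> = complex_of_real (-2 * (Im (Am 1) * Im (cnj (hh 2 3)) - Im (Am 2) * Im (cnj (hh 1 3)) + Im (Am 3) * Im (cnj (hh 1 2))))"
    unfolding hc by (rule E_step2[OF c1])
  also have "\<dots> = complex_of_real (-2 * Im gam * ((1 + pc\<^sup>2) * aa + (pa\<^sup>2 + pb\<^sup>2) * cc
        + 2 * (pb - pa * pc) * Re hAC + 2 * (pa + pb * pc) * Im hAC))"
  proof -
    have ccR: "cc = ha * (Re cA * Re cA + Im cA * Im cA) + hb * (Re cB * Re cB + Im cB * Im cB)"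
      unfolding cc_def cmod_power2 by (simp add: power2_eq_square)
    have aaR: "aa = ha * (Re aA * Re aA + Im aA * Im aA) + hb * (Re aB * Re aB + Im aB * Im aB)"
      unfolding aa_def cmod_power2 by (simp add: power2_eq_square)
    have i23: "Im (cnj (hh 2 3)) = - (Re hAC + pb * cc + pc * Im hAC)"
      by (simp add: ccR aaR hh_def X X[unfolded One_nat_def] hAC_def algebra_simps)
    have i13: "Im (cnj (hh 1 3)) = - (Im hAC + pa * cc - pc * Re hAC)"
      by (simp add: ccR aaR hh_def X X[unfolded One_nat_def] hAC_def algebra_simps)
    have i12: "Im (cnj (hh 1 2)) = aa + pb * Re hAC + pa * Im hAC"
      by (simp add: ccR aaR hh_def X X[unfolded One_nat_def] hAC_def algebra_simps)
    have a1: "Im (Am 1) = Im al + pa * Re gam" "Re (Am 1) = Re al - pa * Im gam"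
      by (simp_all add: Am_def X X[unfolded One_nat_def] al_def gam_def algebra_simps)
    have a2: "Im (Am 2) = Re al + pb * Re gam" "Re (Am 2) = - Im al - pb * Im gam"
      by (simp_all add: Am_def X X[unfolded One_nat_def] al_def gam_def algebra_simps)
    have a3: "Im (Am 3) = Im gam + pc * Re gam" "Re (Am 3) = Re gam - pc * Im gam"
      by (simp_all add: Am_def X X[unfolded One_nat_def] al_def gam_def algebra_simps)
    have s1: "Re al = pa * Im gam" using c1(1) a1(2) by simp
    have s2: "Im al = - pb * Im gam" using c1(2) a2(2) by simp
    have s3: "Re gam = pc * Im gam" using c1(3) a3(2) by simp
    show ?thesis unfolding i23 i13 i12 a1(1) a2(1) a3(1) s1 s2 s3
      by (simp add: algebra_simps power2_eq_square)
  qed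
  finally show ?thesis .
qed



lemma B_pos:
  fixes ha hb pa pb pc :: real and aA aB cA cB :: complex
  assumes h: "ha > 0" "hb > 0" and det: "aA * cB - aB * cA \<noteq> 0"
  defines "aa \<equiv> ha * (cmod aA)\<^sup>2 + hb * (cmod aB)\<^sup>2"
  defines "cc \<equiv> ha * (cmod cA)\<^sup>2 + hb * (cmod cB)\<^sup>2"
  defines "hAC \<equiv> ha * aA * cnj cA + hb * aB * cnj cB"
  shows "(1 + pc\<^sup>2) * aa + (pa\<^sup>2 + pb\<^sup>2) * cc
        + 2 * (pb - pa * pc) * Re hAC + 2 * (pa + pb * pc) * Im hAC > 0"
proof -
  define k where "k = Complex (pb - pa * pc) (pa + pb * pc)"
  define sP where "sP = 1 + pc\<^sup>2"
  have sP: "sP > 0" unfolding sP_def by (smt (verit) zero_le_power2)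
  define W1 where "W1 = complex_of_real sP * aA + k * cA"
  define W2 where "W2 = complex_of_real sP * aB + k * cB"
  have eq: "(1 + pc\<^sup>2) * ((1 + pc\<^sup>2) * aa + (pa\<^sup>2 + pb\<^sup>2) * cc
        + 2 * (pb - pa * pc) * Re hAC + 2 * (pa + pb * pc) * Im hAC) = ha * (cmod W1)\<^sup>2 + hb * (cmod W2)\<^sup>2"
    unfolding aa_def cc_def hAC_def W1_def W2_def k_def cmod_power2 sP_def
    by (simp add: algebra_simps power2_eq_square)
  have "W1 \<noteq> 0 \<or> W2 \<noteq> 0"
  proof (rule ccontr)
    assume "\<not> (W1 \<noteq> 0 \<or> W2 \<noteq> 0)"
    then have "W1 * cB - W2 * cA = 0" by simp
    then have "complex_of_real sP * (aA * cB - aB * cA) = 0"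
      unfolding W1_def W2_def by (simp add: algebra_simps)
    then show False using det sP by simp
  qed
  then have "ha * (cmod W1)\<^sup>2 + hb * (cmod W2)\<^sup>2 > 0"
    using h by (auto intro: add_pos_nonneg add_nonneg_pos)
  then show ?thesis using eq
    by (smt (verit) mult_nonneg_nonpos zero_le_power2)
qed

lemma unitary_facts:
  assumes "unitary2 a b c d"
  shows "a * cnj a + b * cnj b = 1" "a * cnj c + b * cnj d = 0" "c * cnj c + d * cnj d = 1"
    "c * cnj a + d * cnj b = 0"
    "cnj a * a + cnj c * c = 1" "cnj b * b + cnj d * d = 1" "cnj b * a + cnj d * c = 0"
    "a * d - b * c \<noteq> 0"
proof -
  have aa: "a * cnj a + c * cnj c = 1" using assms unfolding unitary2_def
    by (metis complex_norm_square of_real_1 of_real_add)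
  have bb: "b * cnj b + d * cnj d = 1" using assms unfolding unitary2_def
    by (metis complex_norm_square of_real_1 of_real_add)
  have ab: "cnj a * b + cnj c * d = 0" using assms unfolding unitary2_def by simp
  have ab': "a * cnj b + c * cnj d = 0" using arg_cong[OF ab, of cnj] by simp
  define D where "D = a * d - b * c"
  have b: "b = - D * cnj c" unfolding D_def using aa ab by algebra
  have d: "d = D * cnj a" unfolding D_def using aa ab by algebra
  have DD: "D * cnj D = 1"
  proof -
    have "b * cnj b + d * cnj d = D * cnj D * (a * cnj a + c * cnj c)"
      by (subst (1 2) b, subst (1 2) d) (simp add: algebra_simps)
    then show ?thesis using aa bb by simp
  qed
  have cb: "cnj b = - cnj D * c" using arg_cong[OF b, of cnj] by simp
  have cd: "cnj d = cnj D * a" using arg_cong[OF d, of cnj] by simp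
  show "a * cnj a + b * cnj b = 1" using aa DD b cb by algebra
  show "a * cnj c + b * cnj d = 0" using DD b cd by algebra
  show "c * cnj c + d * cnj d = 1" using aa DD d cd by algebra
  show "c * cnj a + d * cnj b = 0" using DD d cb by algebra
  show "cnj a * a + cnj c * c = 1" using aa by (simp add: algebra_simps)
  show "cnj b * b + cnj d * d = 1" using bb by (simp add: algebra_simps)
  show "cnj b * a + cnj d * c = 0" using ab' by (simp add: algebra_simps)
  show "a * d - b * c \<noteq> 0" using DD unfolding D_def by auto
qed

lemma HD_unique: "HD e t g D1 \<Longrightarrow> HD e t g D2 \<Longrightarrow> D1 = D2"
  unfolding HD_def by (rule vector_derivative_unique_at)

lemma HD_eqD: "HD e t g D \<Longrightarrow> D = D' \<Longrightarrow> HD e t g D'" by simp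

lemma HD_fst: "HD e t (\<lambda>x. fst x) (fst e)"
  unfolding HD_def by (auto intro!: derivative_eq_intros)
lemma HD_fst_snd: "HD e t (\<lambda>x. fst (snd x)) (fst (snd e))"
  unfolding HD_def by (auto intro!: derivative_eq_intros)
lemma HD_snd_snd: "HD e t (\<lambda>x. snd (snd x)) (snd (snd e))"
  unfolding HD_def by (auto intro!: derivative_eq_intros)

lemma HD_Complex: "HD e t x Dx \<Longrightarrow> HD e t y Dy \<Longrightarrow> HD e t (\<lambda>t. Complex (x t) (y t)) (Complex Dx Dy)"
  unfolding HD_def has_vector_derivative_complex_iff has_real_derivative_iff_has_vector_derivative
  by simp

lemma D3_Complex: "D3 U x x' \<Longrightarrow> D3 U y y' \<Longrightarrow> D3 U (\<lambda>t. Complex (x t) (y t)) (\<lambda>t. Complex (x' t) (y' t))"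
  unfolding D3_def by (auto intro!: HD_Complex continuous_on_Complex)

lemma C3_Complex: "C3 U x \<Longrightarrow> C3 U y \<Longrightarrow> C3 U (\<lambda>t. Complex (x t) (y t))"
  unfolding C3_def using D3_Complex by blast

lemma C32_Complex: "C32 U x \<Longrightarrow> C32 U y \<Longrightarrow> C32 U (\<lambda>t. Complex (x t) (y t))"
  unfolding C32_def using D3_Complex C3_Complex by blast



lemma HD_mult_left: "HD e t g D \<Longrightarrow> HD e t (\<lambda>x. (k::'a::real_normed_algebra) * g x) (k * D)"
  unfolding HD_def by (rule has_vector_derivative_mult_right)

lemma HD_add_const: "HD e t g D \<Longrightarrow> HD e t (\<lambda>x. k + g x) D"
  using HD_add[OF HD_const] by fastforce

lemma HD_power:
  fixes g :: "r3 \<Rightarrow> 'a::real_normed_field"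
  shows "HD e t g D \<Longrightarrow> HD e t (\<lambda>x. g x ^ n) (D * (of_nat n * g t ^ (n - 1)))"
  by (rule HD_chain) (auto intro!: derivative_eq_intros)

locale CL =
  fixes \<zeta> :: c2 and a b c d :: complex and \<Phi> :: "r3 \<Rightarrow> real"
    and V :: "r3 set" and W :: "c2 set" and \<delta> :: real
    and f :: "c2 \<Rightarrow> complex" and z :: c2
  assumes zeta_bd: "\<zeta> \<in> frontier Dom"
    and unitary: "unitary2 a b c d"
    and coords: "dir_deriv (\<lambda>w'. rho (loc_inv \<zeta> a b c d w')) 0 (udir 1) = 0"
                "dir_deriv (\<lambda>w'. rho (loc_inv \<zeta> a b c d w')) 0 (vdir 1) = 0"
                "dir_deriv (\<lambda>w'. rho (loc_inv \<zeta> a b c d w')) 0 (udir 2) = 0"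
                "dir_deriv (\<lambda>w'. rho (loc_inv \<zeta> a b c d w')) 0 (vdir 2) = grad_norm \<zeta>"
    and chart: "open V" "smooth_on V \<Phi>" "open W" "\<zeta> \<in> W"
               "frontier Dom \<inter> W = psi \<zeta> a b c d \<Phi> ` V"
    and delta: "\<delta> > 0" "ball \<zeta> \<delta> \<subseteq> W"
               "\<forall>t\<in>V. \<forall>z'\<in>ball \<zeta> \<delta>. psi \<zeta> a b c d \<Phi> t \<in> ball \<zeta> \<delta> \<longrightarrow>
                   dDelta_du2 (psi \<zeta> a b c d \<Phi>) t z' \<noteq> 0"
    and f_C1: "Ck_on 1 V (\<lambda>t. f (psi \<zeta> a b c d \<Phi> t))"
    and f_supp: "closure {w \<in> frontier Dom. f w \<noteq> 0} \<subseteq> ball \<zeta> \<delta>"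
    and z: "z \<in> Dom" "z \<in> ball \<zeta> \<delta>"
begin

abbreviation "p \<equiv> psi \<zeta> a b c d \<Phi>"

definition P :: "nat \<Rightarrow> r3 \<Rightarrow> real" where "P m t = dir_deriv \<Phi> t (tdir m)"

lemma Ck2: "Ck_on 2 V \<Phi>" using chart(2) unfolding smooth_on_def by blast

lemma Phi_cont: "continuous_on V \<Phi>"
  using Ck2[unfolded Ck_on_def, rule_format, of "[]"] by simp

lemma Phi_HD: "m \<in> {1,2,3} \<Longrightarrow> t \<in> V \<Longrightarrow> HD (tdir m) t \<Phi> (P m t)"
  using Ck2[unfolded Ck_on_def, rule_format, of "[]"] by (auto simp: HD_def P_def)

lemma eqP: "P m = (\<lambda>t. dir_deriv \<Phi> t (tdir m))" by (simp add: P_def fun_eq_iff)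

lemma P_cont: "m \<in> {1,2,3} \<Longrightarrow> continuous_on V (P m)"
proof -
  assume m: "m \<in> {1,2,3}"
  have "length [m] \<le> 2" "set [m] \<subseteq> {1,2,3}" using m by auto
  then have "continuous_on V (pd_iter [m] \<Phi>)" using Ck2 unfolding Ck_on_def by blast
  then show ?thesis unfolding eqP by simp
qed

lemma P_HD: "m \<in> {1,2,3} \<Longrightarrow> t \<in> V \<Longrightarrow> HD (tdir 3) t (P m) (pd_iter [3,m] \<Phi> t)"
proof -
  assume m: "m \<in> {1,2,3}" and t: "t \<in> V"
  have "length [m] \<le> 2" "set [m] \<subseteq> {1,2,3}" "length [m] < 2" using m by auto
  then have "((\<lambda>s. pd_iter [m] \<Phi> (t + s *\<^sub>R tdir 3)) has_vector_derivative pd_iter [3, m] \<Phi> t) (at 0)"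
    using Ck2 t unfolding Ck_on_def by blast
  then show ?thesis unfolding HD_def eqP by simp
qed

lemma PP_cont: "m \<in> {1,2,3} \<Longrightarrow> continuous_on V (pd_iter [3,m] \<Phi>)"
proof -
  assume m: "m \<in> {1,2,3}"
  have "length [3,m] \<le> 2" "set [3,m] \<subseteq> {1,2,3}" using m by auto
  then show ?thesis using Ck2 unfolding Ck_on_def by blast
qed

lemma D3_P: "m \<in> {1,2,3} \<Longrightarrow> D3 V (P m) (pd_iter [3,m] \<Phi>)"
  unfolding D3_def using P_cont PP_cont P_HD by blast

lemma C3_P: "m \<in> {1,2,3} \<Longrightarrow> C3 V (P m)"
  using D3_P D3_C3 by blast

lemma C32_Phi: "C32 V \<Phi>"
  unfolding C32_def D3_def using Phi_cont P_cont[of 3] Phi_HD[of 3] C3_P[of 3] by auto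

lemma psi_fst: "fst (p t) = fst \<zeta> + cnj a * Complex (fst t) (fst (snd t)) + cnj c * Complex (snd (snd t)) (\<Phi> t)"
  by (cases t) (simp add: psi_def loc_inv_def)
lemma psi_snd: "snd (p t) = snd \<zeta> + cnj b * Complex (fst t) (fst (snd t)) + cnj d * Complex (snd (snd t)) (\<Phi> t)"
  by (cases t) (simp add: psi_def loc_inv_def)

lemma C32_psi_fst: "C32 V (\<lambda>t. fst (p t))"
  unfolding psi_fst
  by (intro C32_add C32_mult C32_Complex C32_fst C32_fst_snd C32_snd_snd C32_Phi C32_const)

lemma C32_psi_snd: "C32 V (\<lambda>t. snd (p t))"
  unfolding psi_snd
  by (intro C32_add C32_mult C32_Complex C32_fst C32_fst_snd C32_snd_snd C32_Phi C32_const)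

lemma C32_Delta: "C32 V (\<lambda>t. Delta (p t) z')"
  unfolding Delta_eq rho1_def rho2_def
  by (intro C32_add C32_mult C32_diff C32_Complex C32_Re C32_Im C32_cnj C32_power C32_psi_fst C32_psi_snd C32_const)


lemma rho_cont: "continuous_on UNIV rho"
  unfolding rho_def[abs_def] by (intro continuous_intros)

lemma Dom_eq: "Dom = {w. rho w < 0}" by (auto simp: Dom_def rho_def)

lemma rho_frontier: "w \<in> frontier Dom \<Longrightarrow> rho w = 0"
proof -
  assume w: "w \<in> frontier Dom"
  have o: "open Dom" unfolding Dom_eq
    by (rule open_Collect_less) (use rho_cont in auto)
  have cl: "closed {w. rho w \<le> 0}"
    by (rule closed_Collect_le) (use rho_cont in auto)
  have "closure Dom \<subseteq> {w. rho w \<le> 0}"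
    by (rule closure_minimal[OF _ cl]) (auto simp: Dom_eq)
  moreover have "w \<in> closure Dom" "w \<notin> Dom" using w interior_open[OF o] unfolding frontier_def by auto
  ultimately show ?thesis unfolding Dom_eq by force
qed

lemma p_bd: "t \<in> V \<Longrightarrow> p t \<in> frontier Dom \<and> p t \<in> W"
  using chart(5) by blast

lemma rho_p: "t \<in> V \<Longrightarrow> rho (p t) = 0"
  using p_bd rho_frontier by blast

definition Xd :: "nat \<Rightarrow> nat \<Rightarrow> r3 \<Rightarrow> complex" where
  "Xd j m t = (if j = 1 then cnj a else cnj b) * Complex (fst (tdir m)) (fst (snd (tdir m)))
     + (if j = 1 then cnj c else cnj d) * Complex (snd (snd (tdir m))) (P m t)"

lemma HD_p1: "t \<in> V \<Longrightarrow> m \<in> {1,2,3} \<Longrightarrow> HD (tdir m) t (\<lambda>x. fst (p x)) (Xd 1 m t)"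
proof -
  assume t: "t \<in> V" and m: "m \<in> {1,2,3}"
  have "HD (tdir m) t (\<lambda>x. fst \<zeta> + cnj a * Complex (fst x) (fst (snd x)) + cnj c * Complex (snd (snd x)) (\<Phi> x))
     (0 + cnj a * Complex (fst (tdir m)) (fst (snd (tdir m))) + cnj c * Complex (snd (snd (tdir m))) (P m t))"
    by (intro HD_add HD_const HD_mult_left HD_Complex HD_fst HD_fst_snd HD_snd_snd Phi_HD t m)
  then show ?thesis unfolding psi_fst by (simp add: Xd_def)
qed

lemma HD_p2: "t \<in> V \<Longrightarrow> m \<in> {1,2,3} \<Longrightarrow> HD (tdir m) t (\<lambda>x. snd (p x)) (Xd 2 m t)"
proof -
  assume t: "t \<in> V" and m: "m \<in> {1,2,3}"
  have "HD (tdir m) t (\<lambda>x. snd \<zeta> + cnj b * Complex (fst x) (fst (snd x)) + cnj d * Complex (snd (snd x)) (\<Phi> x))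
     (0 + cnj b * Complex (fst (tdir m)) (fst (snd (tdir m))) + cnj d * Complex (snd (snd (tdir m))) (P m t))"
    by (intro HD_add HD_const HD_mult_left HD_Complex HD_fst HD_fst_snd HD_snd_snd Phi_HD t m)
  then show ?thesis unfolding psi_snd by (simp add: Xd_def)
qed

lemma dpsi_1: "t \<in> V \<Longrightarrow> m \<in> {1,2,3} \<Longrightarrow> dpsi p 1 m t = Xd 1 m t"
  unfolding dpsi_def coord_def using HD_p1 by (simp add: HD_def dir_deriv_eq)
lemma dpsi_2: "t \<in> V \<Longrightarrow> m \<in> {1,2,3} \<Longrightarrow> dpsi p 2 m t = Xd 2 m t"
  unfolding dpsi_def coord_def using HD_p2 by (simp add: HD_def dir_deriv_eq)

lemma rho_p_fun: "rho (p x) = (Re (snd (p x)))^2 + (Im (snd (p x)))^2 + (Re (fst (p x)))^2 + (Im (fst (p x)))^4 - 1"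
  by (simp add: rho_def cmod_power2)

lemma cons: "t \<in> V \<Longrightarrow> m \<in> {1,2,3} \<Longrightarrow> Re (rho1 (p t) * Xd 1 m t + rho2 (p t) * Xd 2 m t) = 0"
proof -
  assume t: "t \<in> V" and m: "m \<in> {1,2,3}"
  have "HD (tdir m) t (\<lambda>x. (Re (snd (p x)))^2 + (Im (snd (p x)))^2 + (Re (fst (p x)))^2 + (Im (fst (p x)))^4 - 1)
     (Re (Xd 2 m t) * (of_nat 2 * (Re (snd (p t)))^(2-1)) + Im (Xd 2 m t) * (of_nat 2 * (Im (snd (p t)))^(2-1))
      + Re (Xd 1 m t) * (of_nat 2 * (Re (fst (p t)))^(2-1)) + Im (Xd 1 m t) * (of_nat 4 * (Im (fst (p t)))^(4-1)) - 0)"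
    by (intro HD_diff HD_add HD_power HD_Re HD_Im HD_p1 HD_p2 HD_const t m)
  then have h1: "HD (tdir m) t (\<lambda>x. rho (p x)) (2 * Re (rho1 (p t) * Xd 1 m t + rho2 (p t) * Xd 2 m t))"
    unfolding rho_p_fun[symmetric] by (rule HD_eqD) (simp add: rho1_def rho2_def algebra_simps)
  have h2: "HD (tdir m) t (\<lambda>x. rho (p x)) 0"
    by (rule HD_cong[OF chart(1) t _ HD_const[of _ _ "0::real"]]) (simp add: rho_p)
  show ?thesis using HD_unique[OF h1 h2] by simp
qed


definition gam :: "r3 \<Rightarrow> complex" where "gam t = dw rhoC 1 (p t) * cnj c + dw rhoC 2 (p t) * cnj d"
definition Bf :: "r3 \<Rightarrow> real" where
  "Bf t = (1 + (P 3 t)\<^sup>2) * (H1 (p t) * (cmod (cnj a))\<^sup>2 + 1 * (cmod (cnj b))\<^sup>2)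
        + ((P 1 t)\<^sup>2 + (P 2 t)\<^sup>2) * (H1 (p t) * (cmod (cnj c))\<^sup>2 + 1 * (cmod (cnj d))\<^sup>2)
        + 2 * (P 2 t - P 1 t * P 3 t) * Re (complex_of_real (H1 (p t)) * cnj a * cnj (cnj c) + complex_of_real 1 * cnj b * cnj (cnj d))
        + 2 * (P 1 t + P 2 t * P 3 t) * Im (complex_of_real (H1 (p t)) * cnj a * cnj (cnj c) + complex_of_real 1 * cnj b * cnj (cnj d))"

lemma Xd_vals: "Xd 1 1 t = cnj a + \<i> * complex_of_real (P 1 t) * cnj c"
  "Xd 2 1 t = cnj b + \<i> * complex_of_real (P 1 t) * cnj d"
  "Xd 1 2 t = \<i> * cnj a + \<i> * complex_of_real (P 2 t) * cnj c"
  "Xd 2 2 t = \<i> * cnj b + \<i> * complex_of_real (P 2 t) * cnj d"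
  "Xd 1 3 t = (1 + \<i> * complex_of_real (P 3 t)) * cnj c"
  "Xd 2 3 t = (1 + \<i> * complex_of_real (P 3 t)) * cnj d"
  by (simp_all add: Xd_def tdir_def complex_eq_iff)

lemma form_eq: "t \<in> V \<Longrightarrow> form_coeff p t = complex_of_real (-2 * Im (gam t) * Bf t)"
  unfolding form_coeff_def gam_def Bf_def
proof (rule E_formula[where ha = "H1 (p t)" and hb = 1 and aA = "cnj a" and aB = "cnj b"
      and cA = "cnj c" and cB = "cnj d" and pa = "P 1 t" and pb = "P 2 t" and pc = "P 3 t"])
  assume t: "t \<in> V"
  show "\<And>j k. j \<in> {1,2} \<Longrightarrow> k \<in> {1,2} \<Longrightarrow> dwbar (dw rhoC j) k (p t) =
     (if j = k then (if j = 1 then complex_of_real (H1 (p t)) else complex_of_real 1) else 0)"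
    by (auto simp: dwbar_11 dwbar_12 dwbar_21 dwbar_22 dwbar_11[unfolded One_nat_def] dwbar_12[unfolded One_nat_def] dwbar_21[unfolded One_nat_def])
  show "dpsi p 1 1 t = cnj a + \<i> * complex_of_real (P 1 t) * cnj c"
       "dpsi p 2 1 t = cnj b + \<i> * complex_of_real (P 1 t) * cnj d"
       "dpsi p 1 2 t = \<i> * cnj a + \<i> * complex_of_real (P 2 t) * cnj c"
       "dpsi p 2 2 t = \<i> * cnj b + \<i> * complex_of_real (P 2 t) * cnj d"
       "dpsi p 1 3 t = (1 + \<i> * complex_of_real (P 3 t)) * cnj c"
       "dpsi p 2 3 t = (1 + \<i> * complex_of_real (P 3 t)) * cnj d"
    using t by (simp_all add: dpsi_1 dpsi_2 Xd_vals dpsi_1[unfolded One_nat_def] dpsi_2[unfolded One_nat_def] Xd_vals[unfolded One_nat_def])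
  show "\<And>m. m \<in> {1,2,3} \<Longrightarrow> Re (dw rhoC 1 (p t) * dpsi p 1 m t + dw rhoC 2 (p t) * dpsi p 2 m t) = 0"
    using t cons by (simp add: dpsi_1 dpsi_2 dw_rhoC_1 dw_rhoC_2 dpsi_1[unfolded One_nat_def] dpsi_2[unfolded One_nat_def] dw_rhoC_1')
qed


lemma gam_ne: "t \<in> V \<Longrightarrow> Im (gam t) \<noteq> 0"
proof
  assume t: "t \<in> V" and g0: "Im (gam t) = 0"
  define r1 where "r1 = rho1 (p t)"
  define r2 where "r2 = rho2 (p t)"
  define al where "al = r1 * cnj a + r2 * cnj b"
  define ga where "ga = r1 * cnj c + r2 * cnj d"
  have gg: "gam t = ga" unfolding gam_def ga_def r1_def r2_def by (simp add: dw_rhoC_1 dw_rhoC_1' dw_rhoC_2)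
  have c1: "Re (r1 * Xd 1 1 t + r2 * Xd 2 1 t) = 0" using cons[OF t, of 1] by (simp add: r1_def r2_def)
  have c2: "Re (r1 * Xd 1 2 t + r2 * Xd 2 2 t) = 0" using cons[OF t, of 2] by (simp add: r1_def r2_def)
  have c3: "Re (r1 * Xd 1 3 t + r2 * Xd 2 3 t) = 0" using cons[OF t, of 3] by (simp add: r1_def r2_def)
  have e1: "r1 * Xd 1 1 t + r2 * Xd 2 1 t = al + \<i> * P 1 t * ga"
    unfolding Xd_vals al_def ga_def by (simp add: algebra_simps)
  have e2: "r1 * Xd 1 2 t + r2 * Xd 2 2 t = \<i> * al + \<i> * P 2 t * ga"
    unfolding Xd_vals al_def ga_def by (simp add: algebra_simps)
  have e3: "r1 * Xd 1 3 t + r2 * Xd 2 3 t = (1 + \<i> * P 3 t) * ga"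
    unfolding Xd_vals al_def ga_def by (simp add: algebra_simps)
  have gi: "Im ga = 0" using g0 gg by simp
  have "Re al = 0" using c1 gi unfolding e1 by simp
  moreover have "Im al = 0" using c2 gi unfolding e2 by simp
  ultimately have al0: "al = 0" by (simp add: complex_eq_iff)
  have "Re ga = 0" using c3 gi unfolding e3 by simp
  then have ga0: "ga = 0" using gi by (simp add: complex_eq_iff)
  have u: "cnj a * a + cnj c * c = 1" "cnj b * b + cnj d * d = 1" "cnj b * a + cnj d * c = 0"
      "cnj a * b + cnj c * d = 0"
    using unitary_facts[OF unitary] unitary unfolding unitary2_def by auto
  have "r1 = a * al + c * ga"
  proof -
    have "a * al + c * ga = r1 * (cnj a * a + cnj c * c) + r2 * (cnj b * a + cnj d * c)"
      unfolding al_def ga_def by (simp add: algebra_simps)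
    then show ?thesis using u by simp
  qed
  then have r10: "r1 = 0" using al0 ga0 by simp
  have "r2 = b * al + d * ga"
  proof -
    have "b * al + d * ga = r1 * (cnj a * b + cnj c * d) + r2 * (cnj b * b + cnj d * d)"
      unfolding al_def ga_def by (simp add: algebra_simps)
    then show ?thesis using u by simp
  qed
  then have r20: "r2 = 0" using al0 ga0 by simp
  have "Re (fst (p t)) = 0" "Im (fst (p t)) = 0" "snd (p t) = 0"
    using r10 r20 unfolding r1_def r2_def rho1_def rho2_def by (auto simp: complex_eq_iff)
  then have "rho (p t) = -1" by (simp add: rho_def)
  then show False using rho_p[OF t] by simp
qed

lemma H1_pos: "H1 w > 0"
proof -
  have "0 \<le> 6 * Im (fst w)^2" by simp
  then show ?thesis unfolding H1_def by (simp add: add_pos_nonneg)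
qed

lemma det_ne: "cnj a * cnj d - cnj b * cnj c \<noteq> 0"
proof -
  have "cnj a * cnj d - cnj b * cnj c = cnj (a * d - b * c)" by simp
  then show ?thesis using unitary_facts(8)[OF unitary] by (metis complex_cnj_zero_iff right_minus_eq)
qed

lemma Bf_pos: "Bf t > 0"
  unfolding Bf_def
  by (rule B_pos[where ha = "H1 (p t)" and hb = 1 and aA = "cnj a" and aB = "cnj b"
      and cA = "cnj c" and cB = "cnj d" and pa = "P 1 t" and pb = "P 2 t" and pc = "P 3 t", OF H1_pos _ det_ne]) simp

lemma form_ne: "t \<in> V \<Longrightarrow> form_coeff p t \<noteq> 0"
proof -
  assume t: "t \<in> V"
  have "-2 * Im (gam t) * Bf t \<noteq> 0" using gam_ne[OF t] Bf_pos[of t] by simp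
  then show ?thesis using form_eq[OF t] by simp
qed

lemma C3_psi_fst: "C3 V (\<lambda>t. fst (p t))" by (rule C32_C3[OF C32_psi_fst])
lemma C3_psi_snd: "C3 V (\<lambda>t. snd (p t))" by (rule C32_C3[OF C32_psi_snd])

lemma C3_form: "C3 V (\<lambda>t. form_coeff p t)"
proof (rule C3_cong[OF chart(1)])
  show "\<forall>x\<in>V. complex_of_real (-2 * Im (gam x) * Bf x) = form_coeff p x" using form_eq by simp
  show "C3 V (\<lambda>x. complex_of_real (-2 * Im (gam x) * Bf x))"
    unfolding gam_def Bf_def dw_rhoC_1 dw_rhoC_2 rho1_def rho2_def H1_def
    by (intro C3_of_real C3_mult C3_add C3_diff C3_Im C3_Re C3_power C3_divide C3_Complex C3_cnj
        C3_psi_fst C3_psi_snd C3_P C3_const) auto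
qed

lemma C3_Lam: "C3 V (Lam p)"
proof -
  have "C3 V (\<lambda>t. cmod (form_coeff p t / (2 * complex_of_real pi * \<i>)\<^sup>2))"
    by (intro C3_norm C3_divide C3_form C3_const) (auto simp: form_ne)
  then show ?thesis unfolding Lam_def[abs_def] by simp
qed

end


lemma Delta_re_pos:
  assumes w: "rho w = 0" and zD: "z \<in> Dom"
  shows "Re (Delta w z) > 0"
proof -
  define x1 where "x1 = Re (fst w)"
  define y1 where "y1 = Im (fst w)"
  define u where "u = Re (snd w)"
  define v where "v = Im (snd w)"
  define a1 where "a1 = Re (fst z)"
  define b1 where "b1 = Im (fst z)"
  define s where "s = Re (snd z)"
  define t where "t = Im (snd z)"
  have re: "Re (Delta w z) = x1 * (x1 - a1) + 2 * y1^3 * (y1 - b1) + u * (u - s) + v * (v - t)"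
    by (simp add: Delta_eq rho1_def rho2_def x1_def y1_def u_def v_def a1_def b1_def s_def t_def algebra_simps)
  have h1: "u^2 + v^2 + x1^2 + y1^4 = 1" using w by (simp add: rho_def cmod_power2 x1_def y1_def u_def v_def)
  have h2: "s^2 + t^2 + a1^2 + b1^4 < 1" using zD by (simp add: Dom_def cmod_power2 a1_def b1_def s_def t_def)
  have id: "2 * (x1 * (x1 - a1) + 2 * y1^3 * (y1 - b1) + u * (u - s) + v * (v - t))
     = (x1 - a1)^2 + (u - s)^2 + (v - t)^2 + (y1 - b1)^2 * (2 * y1^2 + (y1 + b1)^2)
       + (u^2 + v^2 + x1^2 + y1^4) - (s^2 + t^2 + a1^2 + b1^4)"
    by algebra
  define N where "N = (x1 - a1)^2 + (u - s)^2 + (v - t)^2 + (y1 - b1)^2 * (2 * y1^2 + (y1 + b1)^2)"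
  define R where "R = x1 * (x1 - a1) + 2 * y1^3 * (y1 - b1) + u * (u - s) + v * (v - t)"
  define Z where "Z = s^2 + t^2 + a1^2 + b1^4"
  have "0 \<le> N" unfolding N_def
    by (intro add_nonneg_nonneg mult_nonneg_nonneg) auto
  moreover have "2 * R = N + 1 - Z" using id h1 unfolding N_def R_def Z_def by simp
  moreover have "Z < 1" using h2 unfolding Z_def .
  ultimately have "R > 0" by linarith
  then show ?thesis unfolding re R_def .
qed


context CL begin

lemma cont_p: "continuous_on V p"
proof -
  have "continuous_on V (\<lambda>t. (fst (p t), snd (p t)))"
    by (intro continuous_on_Pair C3_cont C3_psi_fst C3_psi_snd)
  then show ?thesis by simp
qed

definition S :: "c2 set" where "S = closure {w \<in> frontier Dom. f w \<noteq> 0}"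
definition K :: "r3 set" where "K = {t \<in> V. p t \<in> S}"
definition Onb :: "r3 set" where "Onb = {t \<in> V. p t \<in> ball \<zeta> \<delta>}"

lemma S_sub: "S \<subseteq> frontier Dom" "S \<subseteq> ball \<zeta> \<delta>"
proof -
  have "closure {w \<in> frontier Dom. f w \<noteq> 0} \<subseteq> frontier Dom"
    by (rule closure_minimal) (auto simp: frontier_closed)
  then show "S \<subseteq> frontier Dom" by (simp add: S_def)
  show "S \<subseteq> ball \<zeta> \<delta>" using f_supp by (simp add: S_def)
qed

lemma K_sub_O: "K \<subseteq> Onb" using S_sub unfolding K_def Onb_def by auto

lemma open_O: "open Onb"
proof -
  have "open (p -` ball \<zeta> \<delta> \<inter> V)" using cont_p chart(1) continuous_on_open_vimage by blast
  moreover have "Onb = p -` ball \<zeta> \<delta> \<inter> V" unfolding Onb_def by auto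
  ultimately show ?thesis by simp
qed

lemma O_sub: "Onb \<subseteq> V" unfolding Onb_def by auto

lemma open_VK: "open (V - K)"
proof -
  have "open (- S)" unfolding S_def by (rule open_Compl) simp
  then have "open (p -` (- S) \<inter> V)" using cont_p chart(1) continuous_on_open_vimage by blast
  moreover have "V - K = p -` (- S) \<inter> V" unfolding K_def by auto
  ultimately show ?thesis by simp
qed

lemma f_zero: "t \<in> V \<Longrightarrow> t \<notin> K \<Longrightarrow> f (p t) = 0"
proof (rule ccontr)
  assume t: "t \<in> V" "t \<notin> K" "f (p t) \<noteq> 0"
  have "p t \<in> frontier Dom" using p_bd[OF t(1)] by simp
  then have "p t \<in> {w \<in> frontier Dom. f w \<noteq> 0}" using t(3) by simp
  then have "p t \<in> S" unfolding S_def by (rule closure_subset[THEN subsetD])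
  then show False using t(1,2) unfolding K_def by simp
qed

definition q :: "c2 \<Rightarrow> r3" where
  "q w = (Re (a * (fst w - fst \<zeta>) + b * (snd w - snd \<zeta>)), Im (a * (fst w - fst \<zeta>) + b * (snd w - snd \<zeta>)),
          Re (c * (fst w - fst \<zeta>) + d * (snd w - snd \<zeta>)))"

lemma q_p: "q (p t) = t"
proof -
  obtain t1 t2 t3 where tt: "t = (t1, t2, t3)" by (cases t) auto
  define X where "X = Complex t1 t2"
  define Y where "Y = Complex t3 (\<Phi> t)"
  have u: "a * cnj a + b * cnj b = 1" "a * cnj c + b * cnj d = 0" "c * cnj c + d * cnj d = 1"
    "c * cnj a + d * cnj b = 0" using unitary_facts[OF unitary] by auto
  have e1: "a * (fst (p t) - fst \<zeta>) + b * (snd (p t) - snd \<zeta>) = (a * cnj a + b * cnj b) * X + (a * cnj c + b * cnj d) * Y"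
    unfolding psi_fst psi_snd X_def Y_def tt by (simp add: algebra_simps)
  have e2: "c * (fst (p t) - fst \<zeta>) + d * (snd (p t) - snd \<zeta>) = (c * cnj a + d * cnj b) * X + (c * cnj c + d * cnj d) * Y"
    unfolding psi_fst psi_snd X_def Y_def tt by (simp add: algebra_simps)
  show ?thesis unfolding q_def e1 e2 u by (simp add: X_def Y_def tt)
qed

lemma compact_K: "compact K"
proof -
  have cS: "compact S"
    unfolding compact_eq_bounded_closed using bounded_subset[OF bounded_ball S_sub(2)] by (simp add: S_def)
  have cq: "continuous_on UNIV q" unfolding q_def[abs_def] by (intro continuous_intros)
  have "K = q ` S"
  proof
    show "K \<subseteq> q ` S"
    proof
      fix t assume "t \<in> K"
      then have "p t \<in> S" unfolding K_def by simp
      then show "t \<in> q ` S" using q_p[of t] by (metis image_eqI)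
    qed
    show "q ` S \<subseteq> K"
    proof
      fix x assume "x \<in> q ` S"
      then obtain w where w: "w \<in> S" "x = q w" by blast
      then have "w \<in> frontier Dom \<inter> W" using S_sub delta(2) by blast
      then obtain t where t: "t \<in> V" "w = p t" using chart(5) by blast
      then show "x \<in> K" using w q_p unfolding K_def by simp
    qed
  qed
  then show ?thesis using compact_continuous_image[OF continuous_on_subset[OF cq] cS] by simp
qed

end


lemma HD_line:
  assumes "HD (tdir 3) (x, y, s) g D"
  shows "((\<lambda>u. g (x, y, u)) has_vector_derivative D) (at s)"
proof -
  have 1: "((\<lambda>u. u - s) has_vector_derivative 1) (at s)"
    by (auto intro!: derivative_eq_intros)
  have 2: "((\<lambda>r. g ((x, y, s) + r *\<^sub>R tdir 3)) has_vector_derivative D) (at ((\<lambda>u. u - s) s))"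
    using assms unfolding HD_def by simp
  have "(((\<lambda>r. g ((x, y, s) + r *\<^sub>R tdir 3)) \<circ> (\<lambda>u. u - s)) has_vector_derivative (1 *\<^sub>R D)) (at s)"
    by (rule vector_diff_chain_at[OF 1 2])
  moreover have "((\<lambda>r. g ((x, y, s) + r *\<^sub>R tdir 3)) \<circ> (\<lambda>u. u - s)) = (\<lambda>u. g (x, y, u))"
    by (rule ext) (simp add: tdir_def)
  ultimately show ?thesis by simp
qed

context CL begin

definition fp :: "r3 \<Rightarrow> complex" where "fp t = f (p t)"
definition Dl :: "r3 \<Rightarrow> complex" where "Dl t = Delta (p t) z"

lemma Dl_ne: "t \<in> V \<Longrightarrow> Dl t \<noteq> 0"
proof -
  assume t: "t \<in> V"
  have "Re (Delta (p t) z) > 0" by (rule Delta_re_pos[OF rho_p[OF t] z(1)])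
  then show ?thesis unfolding Dl_def by auto
qed

lemma fp_D3: "D3 V fp (pd_iter [3] fp)"
proof -
  have fpe: "fp = (\<lambda>t. f (p t))" by (simp add: fp_def[abs_def])
  have c0: "continuous_on V fp" using f_C1[unfolded Ck_on_def, rule_format, of "[]"] fpe by simp
  have c1: "continuous_on V (pd_iter [3] fp)" using f_C1[unfolded Ck_on_def, rule_format, of "[3]"] fpe by simp
  have h: "\<forall>t\<in>V. HD (tdir 3) t fp (pd_iter [3] fp t)"
    using f_C1[unfolded Ck_on_def, rule_format, of "[]"] fpe by (simp add: HD_def)
  show ?thesis unfolding D3_def using c0 c1 h by blast
qed

lemma C3_fp: "C3 V fp" using fp_D3 by (rule D3_C3)

definition Dl' :: "r3 \<Rightarrow> complex" where "Dl' = (SOME g. D3 V Dl g \<and> C3 V g)"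

lemma Dl'_props: "D3 V Dl Dl'" "C3 V Dl'"
proof -
  have "\<exists>g. D3 V Dl g \<and> C3 V g" using C32_Delta[of z] unfolding C32_def Dl_def[abs_def] .
  then have "D3 V Dl Dl' \<and> C3 V Dl'" unfolding Dl'_def by (rule someI_ex)
  then show "D3 V Dl Dl'" "C3 V Dl'" by auto
qed

lemma C3_Dl: "C3 V Dl" using Dl'_props(1) by (rule D3_C3)

lemma dD_eq: "t \<in> V \<Longrightarrow> dDelta_du2 p t z = Dl' t"
  using Dl'_props(1) unfolding D3_def HD_def dDelta_du2_def Dl_def[abs_def]
  by (simp add: dir_deriv_eq)

definition Gf :: "r3 \<Rightarrow> complex" where
  "Gf t = f (p t) * (complex_of_real (Lam p t) / dDelta_du2 p t z)"

lemma Dl'_ne: "t \<in> Onb \<Longrightarrow> Dl' t \<noteq> 0"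
proof -
  assume "t \<in> Onb"
  then have t: "t \<in> V" "p t \<in> ball \<zeta> \<delta>" unfolding Onb_def by auto
  then have "dDelta_du2 p t z \<noteq> 0" using delta(3) z(2) by blast
  then show ?thesis using dD_eq[OF t(1)] by simp
qed

lemma Gf_eq: "t \<in> Onb \<Longrightarrow> Gf t = fp t * (complex_of_real (Lam p t) / Dl' t)"
proof -
  assume "t \<in> Onb"
  then have "t \<in> V" using O_sub by blast
  then show ?thesis using dD_eq unfolding Gf_def fp_def by simp
qed

lemma C3_Gf: "C3 Onb Gf"
proof (rule C3_cong[OF open_O])
  show "\<forall>t\<in>Onb. fp t * (complex_of_real (Lam p t) / Dl' t) = Gf t"
    using Gf_eq by simp
  show "C3 Onb (\<lambda>t. fp t * (complex_of_real (Lam p t) / Dl' t))"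
    by (intro C3_mult C3_divide C3_of_real C3_mono[OF C3_fp O_sub] C3_mono[OF C3_Lam O_sub]
        C3_mono[OF Dl'_props(2) O_sub]) (use Dl'_ne in auto)
qed

definition G' :: "r3 \<Rightarrow> complex" where "G' = (SOME g. D3 Onb Gf g)"

lemma G'_D3: "D3 Onb Gf G'"
  using C3_Gf unfolding C3_def G'_def by (rule someI_ex)

lemma dGf: "t \<in> Onb \<Longrightarrow> dir_deriv Gf t (tdir 3) = G' t"
  using G'_D3 unfolding D3_def HD_def by (simp add: dir_deriv_eq)

lemma Gf_zero: "t \<in> V - K \<Longrightarrow> Gf t = 0"
  using f_zero unfolding Gf_def by auto

lemma HD_Gf0: "t \<in> V - K \<Longrightarrow> HD (tdir 3) t Gf 0"
  by (rule HD_cong[OF open_VK _ _ HD_const[of _ _ "0::complex"]]) (use Gf_zero in auto)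

lemma dGf0: "t \<in> V - K \<Longrightarrow> dir_deriv Gf t (tdir 3) = 0"
  using HD_Gf0 unfolding HD_def by (simp add: dir_deriv_eq)

lemma G'0: "t \<in> Onb - K \<Longrightarrow> G' t = 0"
  using HD_Gf0[of t] G'_D3 O_sub unfolding D3_def by (auto intro: HD_unique)

definition h' :: "r3 \<Rightarrow> complex" where
  "h' t = Gf t * (Dl' t * (- (inverse (Dl t))\<^sup>2)) + G' t * inverse (Dl t)"

lemma h_D3: "D3 Onb (\<lambda>t. Gf t * inverse (Dl t)) h'"
  unfolding h'_def
  by (intro D3_mult G'_D3 D3_inverse D3_mono[OF Dl'_props(1) O_sub]) (use Dl_ne O_sub in auto)

definition Rt :: "r3 \<Rightarrow> complex" where "Rt t = (if t \<in> Onb then G' t / Dl t else 0)"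
definition Lt :: "r3 \<Rightarrow> complex" where
  "Lt t = (if t \<in> Onb then fp t * complex_of_real (Lam p t) / (Dl t)\<^sup>2 else 0)"
definition ht :: "r3 \<Rightarrow> complex" where "ht t = (if t \<in> Onb then Gf t * inverse (Dl t) else 0)"

lemma h'_eq: "t \<in> Onb \<Longrightarrow> h' t = Rt t - Lt t"
proof -
  assume t: "t \<in> Onb"
  have "Gf t = fp t * (complex_of_real (Lam p t) / Dl' t)"
    using Gf_eq[OF t] .
  then show ?thesis using t Dl'_ne[OF t] Dl_ne[of t] O_sub unfolding h'_def Rt_def Lt_def
    by (auto simp: field_simps power2_eq_square)
qed

lemma zero_off_K: "t \<notin> K \<Longrightarrow> Rt t = 0 \<and> Lt t = 0 \<and> ht t = 0"
proof (cases "t \<in> Onb")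
  case True
  assume tK: "t \<notin> K"
  have tV: "t \<in> V" using True O_sub by blast
  have "G' t = 0" using G'0 True tK by blast
  moreover have "fp t = 0" using f_zero[OF tV tK] unfolding fp_def .
  moreover have "Gf t = 0" using Gf_zero tV tK by blast
  ultimately show ?thesis unfolding Rt_def Lt_def ht_def by simp
next
  case False
  then show ?thesis unfolding Rt_def Lt_def ht_def by simp
qed

end


lemma cont_glue:
  fixes g :: "r3 \<Rightarrow> complex"
  assumes "open O1" "K1 \<subseteq> O1" "compact K1" "continuous_on O1 g" "\<forall>t. t \<notin> K1 \<longrightarrow> g t = 0"
  shows "continuous_on UNIV g"
proof -
  have oK: "open (- K1)" using assms(3) by (simp add: compact_imp_closed open_Compl)
  have "continuous_on (- K1) g"
    by (rule continuous_on_eq[of _ "\<lambda>_. 0"]) (use assms(5) in auto)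
  then have "continuous_on (O1 \<union> - K1) g" using continuous_on_open_Un[OF assms(1) oK assms(4)] by blast
  moreover have "O1 \<union> - K1 = UNIV" using assms(2) by blast
  ultimately show ?thesis by simp
qed

lemma triple_fubini:
  fixes F :: "r3 \<Rightarrow> complex"
  assumes "continuous_on UNIV F"
  shows "integral (cbox (a1, a2, a3) (b1, b2, b3)) F =
    integral {a1..b1} (\<lambda>x. integral {a2..b2} (\<lambda>y. integral {a3..b3} (\<lambda>u. F (x, y, u))))"
proof -
  have "integral (cbox (a1, a2, a3) (b1, b2, b3)) F =
      integral (cbox a1 b1) (\<lambda>x. integral (cbox (a2, a3) (b2, b3)) (\<lambda>y. F (x, y)))"
    by (rule integral_prod_continuous) (rule continuous_on_subset[OF assms], simp)
  also have "\<dots> = integral (cbox a1 b1) (\<lambda>x. integral (cbox a2 b2) (\<lambda>y. integral (cbox a3 b3) (\<lambda>u. F (x, y, u))))"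
  proof (rule integral_cong)
    fix x
    have c: "continuous_on UNIV (\<lambda>y. F (x, y))"
      by (rule continuous_on_compose2[OF assms]) (auto intro!: continuous_intros)
    show "integral (cbox (a2, a3) (b2, b3)) (\<lambda>y. F (x, y)) =
        integral (cbox a2 b2) (\<lambda>y. integral (cbox a3 b3) (\<lambda>u. F (x, y, u)))"
      by (rule integral_prod_continuous) (rule continuous_on_subset[OF c], simp)
  qed
  finally show ?thesis by (simp add: cbox_interval)
qed

context CL begin

lemma open_nK: "open (- K)" using compact_K by (simp add: compact_imp_closed open_Compl)

lemma cont_Rt: "continuous_on UNIV Rt"
proof (rule cont_glue[OF open_O K_sub_O compact_K])
  show "\<forall>t. t \<notin> K \<longrightarrow> Rt t = 0" using zero_off_K by blast
  have "continuous_on Onb (\<lambda>t. G' t / Dl t)"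
    using G'_D3 C3_cont[OF C3_mono[OF C3_Dl O_sub]] Dl_ne O_sub unfolding D3_def
    by (intro continuous_on_divide) auto
  then show "continuous_on Onb Rt"
    by (rule continuous_on_eq) (simp add: Rt_def)
qed

lemma cont_Lt: "continuous_on UNIV Lt"
proof (rule cont_glue[OF open_O K_sub_O compact_K])
  show "\<forall>t. t \<notin> K \<longrightarrow> Lt t = 0" using zero_off_K by blast
  have "continuous_on Onb (\<lambda>t. fp t * complex_of_real (Lam p t) / (Dl t)\<^sup>2)"
    using C3_cont[OF C3_mono[OF C3_Dl O_sub]] C3_cont[OF C3_mono[OF C3_fp O_sub]]
      C3_cont[OF C3_mono[OF C3_Lam O_sub]] Dl_ne O_sub
    by (intro continuous_intros) auto
  then show "continuous_on Onb Lt"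
    by (rule continuous_on_eq) (simp add: Lt_def)
qed

lemma line_deriv: "((\<lambda>u. ht (x, y, u)) has_vector_derivative (Rt (x, y, s) - Lt (x, y, s))) (at s)"
proof (cases "(x, y, s) \<in> Onb")
  case True
  have "HD (tdir 3) (x, y, s) (\<lambda>t. Gf t * inverse (Dl t)) (h' (x, y, s))"
    using h_D3 True unfolding D3_def by blast
  then have "HD (tdir 3) (x, y, s) ht (h' (x, y, s))"
    by (rule HD_cong[OF open_O True, rotated]) (simp add: ht_def)
  then show ?thesis using h'_eq[OF True] by (simp add: HD_line)
next
  case False
  then have nK: "(x, y, s) \<notin> K" using K_sub_O by blast
  have "HD (tdir 3) (x, y, s) ht 0"
    by (rule HD_cong[OF open_nK _ _ HD_const[of _ _ "0::complex"]]) (use nK zero_off_K in auto)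
  then show ?thesis using zero_off_K[OF nK] by (simp add: HD_line)
qed

end


context CL begin

lemma main:
  "cauchy_leray_chart p V f z =
    integral V (\<lambda>t. (1 / Delta (p t) z) *
      dir_deriv (\<lambda>t. f (p t) * (complex_of_real (Lam p t) / dDelta_du2 p t z)) t (tdir 3))"
proof -
  have Gfe: "(\<lambda>t. f (p t) * (complex_of_real (Lam p t) / dDelta_du2 p t z)) = Gf"
    by (rule ext) (simp add: Gf_def)
  obtain r where r: "r > 0" "\<forall>t\<in>K. norm t \<le> r"
    using compact_imp_bounded[OF compact_K] unfolding bounded_pos by blast
  define R where "R = r + 1"
  define B where "B = cbox (-R, -R, -R) (R, R, R)"
  have outB: "t \<notin> K" if "t \<notin> B" for t
  proof
    assume tK: "t \<in> K"
    obtain t1 t2 t3 where tt: "t = (t1, t2, t3)" by (cases t) auto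
    have n: "norm t \<le> r" using r tK by blast
    have "\<bar>t1\<bar> \<le> norm t" unfolding tt using norm_fst_le[of t1 "(t2, t3)"] by simp
    moreover have "\<bar>t2\<bar> \<le> norm t" unfolding tt
      using norm_fst_le[of t2 t3] norm_snd_le[of "(t2, t3)" t1] by simp
    moreover have "\<bar>t3\<bar> \<le> norm t" unfolding tt
      using norm_snd_le[of t3 t2] norm_snd_le[of "(t2, t3)" t1] by simp
    ultimately have "t \<in> B" using n unfolding B_def R_def tt
      by (auto simp: cbox_Pair_iff cbox_interval abs_le_iff)
    then show False using that by blast
  qed
  have endK: "(x, y, u) \<notin> K" if "\<bar>u\<bar> = R" for x y u
  proof
    assume "(x, y, u) \<in> K"
    then have "norm (x, y, u) \<le> r" using r by blast
    moreover have "\<bar>u\<bar> \<le> norm (x, y, u)"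
      using norm_snd_le[of u y] norm_snd_le[of "(y, u)" x] by simp
    ultimately show False using that unfolding R_def by simp
  qed
  have L1: "cauchy_leray_chart p V f z = integral V Lt"
    unfolding cauchy_leray_chart_def
  proof (rule integral_cong)
    fix t assume tV: "t \<in> V"
    show "f (p t) * complex_of_real (Lam p t) / (Delta (p t) z)\<^sup>2 = Lt t"
    proof (cases "t \<in> Onb")
      case True then show ?thesis by (simp add: Lt_def fp_def Dl_def)
    next
      case False
      then have "t \<notin> K" using K_sub_O by blast
      then show ?thesis using f_zero[OF tV] False by (simp add: Lt_def)
    qed
  qed
  have R1: "integral V (\<lambda>t. (1 / Delta (p t) z) *
      dir_deriv (\<lambda>t. f (p t) * (complex_of_real (Lam p t) / dDelta_du2 p t z)) t (tdir 3)) = integral V Rt"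
    unfolding Gfe
  proof (rule integral_cong)
    fix t assume tV: "t \<in> V"
    show "1 / Delta (p t) z * dir_deriv Gf t (tdir 3) = Rt t"
    proof (cases "t \<in> Onb")
      case True then show ?thesis by (simp add: Rt_def dGf Dl_def)
    next
      case False
      then have "t \<notin> K" using K_sub_O by blast
      then show ?thesis using dGf0 tV False by (simp add: Rt_def)
    qed
  qed
  have toB: "integral V g = integral B g" if g0: "\<And>t. t \<notin> K \<Longrightarrow> g t = 0" for g :: "r3 \<Rightarrow> complex"
  proof -
    have "integral V g = integral UNIV (\<lambda>t. if t \<in> V then g t else 0)"
      by (rule integral_restrict_UNIV[symmetric])
    also have "(\<lambda>t. if t \<in> V then g t else 0) = (\<lambda>t. if t \<in> B then g t else 0)"
      using g0 outB K_def by (auto simp: fun_eq_iff)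
    also have "integral UNIV \<dots> = integral B g" by (rule integral_restrict_UNIV)
    finally show ?thesis .
  qed
  have LB: "integral V Lt = integral B Lt" by (rule toB) (use zero_off_K in blast)
  have RB: "integral V Rt = integral B Rt" by (rule toB) (use zero_off_K in blast)
  have line: "integral {-R..R} (\<lambda>u. Lt (x, y, u)) = integral {-R..R} (\<lambda>u. Rt (x, y, u))" for x y
  proof -
    have Rpos: "-R \<le> R" using r unfolding R_def by simp
    have "((\<lambda>u. Rt (x, y, u) - Lt (x, y, u)) has_integral (ht (x, y, R) - ht (x, y, -R))) {-R..R}"
      by (rule fundamental_theorem_of_calculus[OF Rpos])
         (rule has_vector_derivative_at_within[OF line_deriv])
    moreover have "ht (x, y, R) = 0" "ht (x, y, -R) = 0"
      using zero_off_K endK[of R] endK[of "-R"] r unfolding R_def by auto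
    ultimately have "integral {-R..R} (\<lambda>u. Rt (x, y, u) - Lt (x, y, u)) = 0"
      by (simp add: integral_unique)
    moreover have "(\<lambda>u. Rt (x, y, u)) integrable_on {-R..R}" "(\<lambda>u. Lt (x, y, u)) integrable_on {-R..R}"
      by (intro integrable_continuous_interval continuous_on_compose2[OF cont_Rt] continuous_on_compose2[OF cont_Lt]
          continuous_intros; simp)+
    ultimately show ?thesis by (simp add: integral_diff)
  qed
  have "integral B Lt = integral B Rt"
    unfolding B_def triple_fubini[OF cont_Lt] triple_fubini[OF cont_Rt] line ..
  then show ?thesis using L1 R1 LB RB by simp
qed

end

theorem corollary2p3:
  fixes \<zeta> :: c2 and a b c d :: complex and \<Phi> :: "r3 \<Rightarrow> real"
    and V :: "r3 set" and W :: "c2 set" and \<delta> :: real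
    and f :: "c2 \<Rightarrow> complex" and z :: c2
  assumes zeta_bd: "\<zeta> \<in> frontier Dom"
    and unitary: "unitary2 a b c d"
    and coords: "dir_deriv (\<lambda>w'. rho (loc_inv \<zeta> a b c d w')) 0 (udir 1) = 0"
                "dir_deriv (\<lambda>w'. rho (loc_inv \<zeta> a b c d w')) 0 (vdir 1) = 0"
                "dir_deriv (\<lambda>w'. rho (loc_inv \<zeta> a b c d w')) 0 (udir 2) = 0"
                "dir_deriv (\<lambda>w'. rho (loc_inv \<zeta> a b c d w')) 0 (vdir 2) = grad_norm \<zeta>"
    and chart: "open V" "smooth_on V \<Phi>" "open W" "\<zeta> \<in> W"
               "frontier Dom \<inter> W = psi \<zeta> a b c d \<Phi> ` V"
    and delta: "\<delta> > 0" "ball \<zeta> \<delta> \<subseteq> W"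
               "\<forall>t\<in>V. \<forall>z'\<in>ball \<zeta> \<delta>. psi \<zeta> a b c d \<Phi> t \<in> ball \<zeta> \<delta> \<longrightarrow>
                   dDelta_du2 (psi \<zeta> a b c d \<Phi>) t z' \<noteq> 0"
    and f_C1: "Ck_on 1 V (\<lambda>t. f (psi \<zeta> a b c d \<Phi> t))"
    and f_supp: "closure {w \<in> frontier Dom. f w \<noteq> 0} \<subseteq> ball \<zeta> \<delta>"
    and z: "z \<in> Dom" "z \<in> ball \<zeta> \<delta>"
  shows "cauchy_leray_chart (psi \<zeta> a b c d \<Phi>) V f z =
    integral V (\<lambda>t. (1 / Delta (psi \<zeta> a b c d \<Phi> t) z) *
      dir_deriv (\<lambda>t. f (psi \<zeta> a b c d \<Phi> t) *
          (complex_of_real (Lam (psi \<zeta> a b c d \<Phi>) t) / dDelta_du2 (psi \<zeta> a b c d \<Phi>) t z))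
        t (tdir 3))"
proof -
  interpret CL \<zeta> a b c d \<Phi> V W \<delta> f z
    unfolding CL_def using assms by blast
  show ?thesis by (rule main)
qed

end
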